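(* With $m_1,m_2$, $r$, $d$, ${\mathfrak p}$, $g$ and $k_{m_1,m_2}$ as below, define $F({\mathfrak z})=\int_{-1}^{{\mathfrak z}} g(t,k_{m_1,m_2})\,{\mathfrak p}(t)\,dt$. Then $F$ is smooth on $[-1,1]$ and satisfies: $F({\mathfrak z})>0$ for $-1<{\mathfrak z}<1$; $F(\pm1)=0$; $F'(-1)=2{\mathfrak p}(-1)/m_2$ and $F'(1)=-2{\mathfrak p}(1)/m_1$; and $\bigl(F'({\mathfrak z})/{\mathfrak p}({\mathfrak z})\bigr)'<0$ for all ${\mathfrak z}\in[-1,1]$.
   Context: $m_1,m_2$ are positive integers, $r$ is real with $0<|r|<1$, $d$ is a positive integer and ${\mathfrak p}(t)=(1+rt)^d$. The function $g(t,k)$ is $2\,\frac{(\frac1{m_1}+\frac1{m_2})e^{-kt}-(\frac{e^k}{m_1}+\frac{e^{-k}}{m_2})}{e^k-e^{-k}}$ for $k\neq0$ and $\frac{1-t}{m_2}-\frac{1+t}{m_1}$ for $k=0$. $k_{m_1,m_2}$ is the unique real number with $\int_{-1}^1 g(t,k_{m_1,m_2}){\mathfrak p}(t)\,dt=0$. *)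

theory Defs
  imports "HOL-Analysis.Analysis"
begin

definition pp :: "real \<Rightarrow> nat \<Rightarrow> real \<Rightarrow> real" where
  "pp r d t = (1 + r * t) ^ d"

definition gg :: "nat \<Rightarrow> nat \<Rightarrow> real \<Rightarrow> real \<Rightarrow> real" where
  "gg m1 m2 t k =
     (if k = 0 then (1 - t) / real m2 - (1 + t) / real m1
      else 2 * ((1 / real m1 + 1 / real m2) * exp (- k * t)
                 - (exp k / real m1 + exp (- k) / real m2)) / (exp k - exp (- k)))"

definition kk :: "nat \<Rightarrow> nat \<Rightarrow> real \<Rightarrow> nat \<Rightarrow> real" where
  "kk m1 m2 r d = (THE k. integral {-1..1} (\<lambda>t. gg m1 m2 t k * pp r d t) = 0)"

definition FF :: "nat \<Rightarrow> nat \<Rightarrow> real \<Rightarrow> nat \<Rightarrow> real \<Rightarrow> real" where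
  "FF m1 m2 r d z = integral {-1..z} (\<lambda>t. gg m1 m2 t (kk m1 m2 r d) * pp r d t)"

end

theory Submission
  imports Defs
begin


definition U :: "real \<Rightarrow> real \<Rightarrow> real" where
  "U k t = (if k = 0 then (1-t)/2 else (exp(-k*t) - exp(-k))/(exp k - exp(-k)))"

lemma den_ne: "k \<noteq> 0 \<Longrightarrow> exp k - exp (-k) \<noteq> (0::real)"
  by (metis eq_iff_diff_eq_0 exp_inj_iff minus_equation_iff neg_equal_zero)

lemma gg_U: "gg m1 m2 t k = 2*(1/real m1 + 1/real m2) * U k t - 2/real m1"
proof (cases "k = 0")
  case True thus ?thesis by (cases "m1=0"; cases "m2 = 0"; simp add: gg_def U_def field_simps)
next
  case False
  have d: "exp k - exp (-k) \<noteq> 0" using den_ne[OF False] .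
  show ?thesis using False d
    by (cases "m1=0"; cases "m2 = 0"; simp add: gg_def U_def field_simps; simp add: algebra_simps)
qed

lemma U_neg: "U (-k) t = 1 - U k (-t)"
proof (cases "k = 0")
  case True thus ?thesis by (simp add: U_def field_simps)
next
  case False
  have d: "exp k - exp (-k) \<noteq> 0" using den_ne[OF False] .
  hence d2: "exp (-k) - exp k \<noteq> 0" by linarith
  show ?thesis using False d d2 by (simp add: U_def field_simps)
qed

lemma U_end: "U k (-1) = 1" "U k 1 = 0"
  using den_ne[of k] by (auto simp: U_def)

lemma U_bounds: assumes "-1 \<le> t" "t \<le> 1" shows "0 \<le> U k t" "U k t \<le> 1"
proof -
  have "0 \<le> U k t \<and> U k t \<le> 1"
  proof (cases "k = 0")
    case True thus ?thesis using assms by (simp add: U_def)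
  next
    case False
    show ?thesis
    proof (cases "k > 0")
      case True
      have "-k \<le> -k*t" "-k*t \<le> k" using True assms mult_left_mono[of "-1" t k] mult_left_mono[of t 1 k] by auto
      hence "exp (-k) \<le> exp (-k*t)" "exp (-k*t) \<le> exp k" by auto
      moreover have "exp (-k) < exp k" using True by simp
      ultimately show ?thesis using False by (auto simp: U_def divide_simps)
    next
      case nf: False
      hence kn: "k < 0" using False by simp
      have "k \<le> -k*t" "-k*t \<le> -k" using kn assms mult_left_mono[of "-1" t "-k"] mult_left_mono[of t 1 "-k"] by auto
      hence "exp k \<le> exp (-k*t)" "exp (-k*t) \<le> exp (-k)" by auto
      moreover have "exp k < exp (-k)" using kn by simp
      ultimately show ?thesis using False by (auto simp: U_def divide_simps)
    qed
  qed
  thus "0 \<le> U k t" "U k t \<le> 1" by auto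
qed




lemma exp_gt_strict: assumes "x \<noteq> 0" shows "1 + x < exp (x::real)"
proof (cases "1 + x/2 < 0")
  case True
  hence "1 + x < 0" by linarith
  thus ?thesis using exp_gt_zero[of x] by linarith
next
  case False
  have "1 + x/2 \<le> exp (x/2)" by (rule exp_ge_add_one_self)
  hence "(1 + x/2)^2 \<le> (exp (x/2))^2" using False by (intro power_mono) auto
  also have "(exp (x/2))^2 = exp x" by (simp add: power2_eq_square exp_add[symmetric])
  finally have "(1+x/2)^2 \<le> exp x" .
  moreover have "(1+x/2)^2 = 1 + x + x^2/4" by (simp add: power2_eq_square field_simps)
  moreover have "x^2 > 0" using assms by simp
  ultimately show ?thesis by linarith
qed

definition Ud :: "real \<Rightarrow> real \<Rightarrow> real" where
  "Ud k t = (if k = 0 then -1/2 else -k*exp(-k*t)/(exp k - exp(-k)))"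

lemma Ud_neg: "Ud k t < 0"
proof (cases "k = 0")
  case True thus ?thesis by (simp add: Ud_def)
next
  case False
  show ?thesis
  proof (cases "k > 0")
    case True
    hence "exp (-k) < exp k" by simp
    thus ?thesis using True by (simp add: Ud_def divide_neg_pos)
  next
    case nf: False
    hence kn: "k < 0" using False by simp
    hence dn: "exp k - exp (-k) < 0" by simp
    have "-k*exp(-k*t) > 0" using kn by (simp add: mult_neg_pos)
    from this dn have "-k*exp(-k*t)/(exp k - exp(-k)) < 0" by (rule divide_pos_neg)
    thus ?thesis using kn by (simp add: Ud_def)
  qed
qed

lemma U_deriv_t: "((\<lambda>t. U k t) has_real_derivative Ud k t) (at t)"
proof (cases "k = 0")
  case True
  have "(\<lambda>t. U k t) = (\<lambda>t. (1-t)/2)" using True by (simp add: U_def)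
  moreover have "((\<lambda>t. (1-t)/2) has_real_derivative -1/2) (at t)"
    by (auto intro!: derivative_eq_intros)
  ultimately show ?thesis using True by (simp add: Ud_def)
next
  case False
  have d: "exp k - exp (-k) \<noteq> 0" using den_ne[OF False] .
  have "(\<lambda>t. U k t) = (\<lambda>t. (exp(-k*t) - exp(-k))/(exp k - exp(-k)))" using False by (simp add: U_def)
  moreover have "((\<lambda>t. (exp(-k*t) - exp(-k))/(exp k - exp(-k))) has_real_derivative Ud k t) (at t)"
  proof -
    have "((\<lambda>t. exp(-k*t) - exp(-k)) has_real_derivative -k*exp(-k*t)) (at t)"
      by (auto intro!: derivative_eq_intros)
    from DERIV_cdivide[OF this, of "exp k - exp(-k)"] show ?thesis using False by (simp add: Ud_def)
  qed
  ultimately show ?thesis by simp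
qed

lemma num_neg: fixes t k :: real assumes "-1 < t" "t < 1" "k \<noteq> 0"
  shows "2 - (1+t)*exp(k*(1-t)) - (1-t)*exp(-k*(1+t)) < 0"
proof -
  have "1 + k*(1-t) < exp(k*(1-t))" using assms exp_gt_strict[of "k*(1-t)"] by auto
  hence a: "(1+t)*(1 + k*(1-t)) < (1+t)*exp(k*(1-t))" using assms by (intro mult_strict_left_mono) auto
  have "1 + (-k*(1+t)) < exp(-k*(1+t))" using assms exp_gt_strict[of "-k*(1+t)"] by auto
  hence b: "(1-t)*(1 + (-k*(1+t))) < (1-t)*exp(-k*(1+t))" using assms by (intro mult_strict_left_mono) auto
  have "(1+t)*(1 + k*(1-t)) + (1-t)*(1 + (-k*(1+t))) = 2" by (simp add: algebra_simps)
  thus ?thesis using a b by linarith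
qed

lemma U_deriv_k: assumes "k \<noteq> 0"
  shows "((\<lambda>k. U k t) has_real_derivative
     (2 - (1+t)*exp(k*(1-t)) - (1-t)*exp(-k*(1+t)))/(exp k - exp(-k))^2) (at k)"
proof -
  have d: "exp k - exp (-k) \<noteq> 0" using den_ne[OF assms] .
  have e1: "exp (-k*t) * exp k = exp (k*(1-t))" by (simp add: exp_add[symmetric] algebra_simps)
  have e2: "exp (-k*t) * exp (-k) = exp (-k*(1+t))" by (simp add: exp_add[symmetric] algebra_simps)
  have e3: "exp k * exp (-k) = 1" by (simp add: exp_add[symmetric])
  have "((\<lambda>k. (exp(-k*t) - exp(-k))/(exp k - exp(-k))) has_real_derivative
     ((-t*exp(-k*t) + exp(-k)) * (exp k - exp(-k)) - (exp k + exp(-k))*(exp(-k*t) - exp(-k)))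
       / (exp k - exp(-k))^Suc (Suc 0)) (at k)"
  proof (rule DERIV_quotient)
    show "exp k - exp (-k) \<noteq> 0" by (rule d)
    show "((\<lambda>k. exp(-k*t) - exp(-k)) has_real_derivative (-t*exp(-k*t) + exp(-k))) (at k)"
      by (auto intro!: derivative_eq_intros)
    show "((\<lambda>k. exp k - exp(-k)) has_real_derivative (exp k + exp(-k))) (at k)"
      by (auto intro!: derivative_eq_intros)
  qed
  moreover have "(-t*exp(-k*t) + exp(-k)) * (exp k - exp(-k)) - (exp k + exp(-k))*(exp(-k*t) - exp(-k))
     = 2 - (1+t)*exp(k*(1-t)) - (1-t)*exp(-k*(1+t))"
  proof -
    have "(-t*exp(-k*t) + exp(-k)) * (exp k - exp(-k)) - (exp k + exp(-k))*(exp(-k*t) - exp(-k))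
      = -t*(exp (-k*t) * exp k) + t*(exp (-k*t) * exp (-k)) + 2*(exp k * exp (-k))
        - (exp (-k*t) * exp k) - (exp (-k*t) * exp (-k))"
      by (simp add: algebra_simps)
    thus ?thesis unfolding e1 e2 e3 by (simp add: algebra_simps)
  qed
  ultimately have D: "((\<lambda>k. (exp(-k*t) - exp(-k))/(exp k - exp(-k))) has_real_derivative
     (2 - (1+t)*exp(k*(1-t)) - (1-t)*exp(-k*(1+t)))/(exp k - exp(-k))^2) (at k)"
    by (simp add: power2_eq_square)
  show ?thesis
  proof (rule has_field_derivative_transform_within_open[OF D])
    show "open (-{0::real})" by auto
    show "k \<in> -{0}" using assms by auto
    fix x :: real assume "x \<in> -{0}"
    thus "(exp(-x*t) - exp(-x))/(exp x - exp(-x)) = U x t" by (simp add: U_def)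
  qed
qed

lemma U_cont_k: "isCont (\<lambda>k. U k t) k0"
proof (cases "k0 = 0")
  case False
  thus ?thesis using U_deriv_k[OF False] DERIV_isCont by blast
next
  case True
  define N where "N = (\<lambda>k::real. exp(-k*t) - exp(-k))"
  define D where "D = (\<lambda>k::real. exp k - exp(-k))"
  have dN: "(N has_real_derivative (1-t)) (at 0)" unfolding N_def
    by (auto intro!: derivative_eq_intros)
  have dD: "(D has_real_derivative 2) (at 0)" unfolding D_def
    by (auto intro!: derivative_eq_intros)
  have lN: "((\<lambda>y. (N y - N 0)/(y - 0)) \<longlongrightarrow> (1-t)) (at 0)"
    using dN by (simp add: has_field_derivative_iff)
  have lD: "((\<lambda>y. (D y - D 0)/(y - 0)) \<longlongrightarrow> 2) (at 0)"
    using dD by (simp add: has_field_derivative_iff)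
  have l: "((\<lambda>y. ((N y - N 0)/(y - 0)) / ((D y - D 0)/(y - 0))) \<longlongrightarrow> (1-t)/2) (at 0)"
    by (rule tendsto_divide[OF lN lD]) simp
  have ev: "eventually (\<lambda>y. ((N y - N 0)/(y - 0)) / ((D y - D 0)/(y - 0)) = U y t) (at (0::real))"
    unfolding eventually_at_filter
    by (rule always_eventually) (auto simp: N_def D_def U_def)
  have "((\<lambda>y. U y t) \<longlongrightarrow> (1-t)/2) (at 0)"
    using Lim_transform_eventually[OF l ev] .
  thus ?thesis using True by (simp add: isCont_def U_def)
qed

lemma U_mono_k: assumes "-1 < t" "t < 1" "k1 < k2" shows "U k2 t < U k1 t"
proof -
  have dec: "U b t < U a t" if "a < b" "a \<ge> 0 \<or> b \<le> 0" for a b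
  proof (rule DERIV_neg_imp_decreasing_open[OF \<open>a < b\<close>])
    fix x assume x: "a < x" "x < b"
    hence "x \<noteq> 0" using that by auto
    have "(2 - (1+t)*exp(x*(1-t)) - (1-t)*exp(-x*(1+t)))/(exp x - exp(-x))^2 < 0"
      using num_neg[OF assms(1,2) \<open>x\<noteq>0\<close>] den_ne[OF \<open>x\<noteq>0\<close>]
      by (simp add: divide_neg_pos)
    thus "\<exists>y. ((\<lambda>k. U k t) has_real_derivative y) (at x) \<and> y < 0"
      using U_deriv_k[OF \<open>x\<noteq>0\<close>] by blast
  next
    show "continuous_on {a..b} (\<lambda>k. U k t)"
      using U_cont_k by (intro continuous_at_imp_continuous_on) auto
  qed
  show ?thesis
  proof (cases "k1 \<ge> 0 \<or> k2 \<le> 0")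
    case True thus ?thesis using dec[OF assms(3)] by auto
  next
    case False
    hence "k1 < 0" "0 < k2" by auto
    thus ?thesis using dec[of k1 0] dec[of 0 k2] by auto
  qed
qed




lemma exp_seq_zero: assumes "x > 0" shows "(\<lambda>n. exp (- (real n * x))) \<longlonglongrightarrow> 0"
proof -
  have "(\<lambda>n. exp (- (real n * x))) = (\<lambda>n. exp (-x) ^ n)"
    by (rule ext) (metis exp_of_nat_mult mult_minus_right)
  moreover have "(\<lambda>n. exp (-x) ^ n) \<longlonglongrightarrow> 0"
    using assms by (intro LIMSEQ_power_zero) auto
  ultimately show ?thesis by simp
qed

lemma U_lim_top: assumes "-1 < t" shows "(\<lambda>n. U (real n) t) \<longlonglongrightarrow> 0"
proof -
  have l: "(\<lambda>n. (exp (- (real n * (1+t))) - exp (- (real n * 2))) / (1 - exp (- (real n * 2)))) \<longlonglongrightarrow> (0 - 0)/(1 - 0)"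
    using assms by (intro tendsto_intros exp_seq_zero) auto
  have ev: "eventually (\<lambda>n. (exp (- (real n * (1+t))) - exp (- (real n * 2))) / (1 - exp (- (real n * 2))) = U (real n) t) sequentially"
    unfolding eventually_sequentially
  proof (intro exI allI impI)
    fix n :: nat assume "1 \<le> n"
    hence k: "real n \<noteq> 0" by simp
    have d: "exp (real n) - exp (- real n) \<noteq> 0" using den_ne[OF k] .
    have e1: "exp (- (real n * (1+t))) = exp (- real n * t) * exp (- real n)"
      by (simp add: exp_add[symmetric] algebra_simps)
    have e2: "exp (- (real n * 2)) = exp (- real n) * exp (- real n)"
      by (simp add: exp_add[symmetric] algebra_simps)
    have e3: "exp (- real n) * exp (real n) = 1" by (simp add: exp_add[symmetric])
    have "1 - exp (- (real n * 2)) = exp (- real n) * (exp (real n) - exp (- real n))"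
      unfolding e2 using e3 by (simp add: algebra_simps)
    moreover have "exp (- (real n * (1+t))) - exp (- (real n * 2)) = exp (- real n) * (exp (- real n * t) - exp (- real n))"
      unfolding e1 e2 by (simp add: algebra_simps)
    ultimately show "(exp (- (real n * (1+t))) - exp (- (real n * 2))) / (1 - exp (- (real n * 2))) = U (real n) t"
      using k d by (simp add: U_def)
  qed
  show ?thesis using Lim_transform_eventually[OF l ev] by simp
qed

lemma U_lim_bot: assumes "t < 1" shows "(\<lambda>n. U (- real n) t) \<longlonglongrightarrow> 1"
proof -
  have "(\<lambda>n. 1 - U (real n) (-t)) \<longlonglongrightarrow> 1 - 0"
    using assms by (intro tendsto_intros U_lim_top) auto
  thus ?thesis by (simp add: U_neg)
qed

lemma integral_pos_strict:
  fixes f :: "real \<Rightarrow> real"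
  assumes "a < b" "continuous_on {a..b} f" "\<And>x. x \<in> {a..b} \<Longrightarrow> 0 \<le> f x"
    "\<And>x. x \<in> {a<..<b} \<Longrightarrow> 0 < f x"
  shows "integral {a..b} f > 0"
proof -
  have int: "f integrable_on {a..b}" using assms(2) by (rule integrable_continuous_interval)
  have ge: "integral {a..b} f \<ge> 0" using int assms(3) by (rule integral_nonneg)
  show ?thesis
  proof (rule ccontr)
    assume "\<not> ?thesis"
    hence "integral {a..b} f = 0" using ge by simp
    hence hi: "(f has_integral 0) (cbox a b)" using int by (metis cbox_interval has_integral_integral)
    have m: "(a+b)/2 \<in> {a<..<b}" using assms(1) by auto
    have "f ((a+b)/2) = 0"
      apply (rule has_integral_0_cbox_imp_0[OF _ _ hi])
      using assms m by (auto simp: cbox_interval box_real)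
    thus False using assms(4)[OF m] by simp
  qed
qed





lemma pe_deriv_step: fixes P Q :: "real poly" and c :: real shows "deriv (\<lambda>t. poly P t * exp (c*t) + poly Q t) = (\<lambda>t. poly (pderiv P + smult c P) t * exp (c*t) + poly (pderiv Q) t)"
proof (rule ext, rule DERIV_imp_deriv)
  fix t :: real
  show "((\<lambda>t. poly P t * exp (c*t) + poly Q t) has_real_derivative poly (pderiv P + smult c P) t * exp (c*t) + poly (pderiv Q) t) (at t)"
    by (auto intro!: derivative_eq_intros poly_DERIV simp: algebra_simps)
qed

lemma pe_deriv: fixes P Q :: "real poly" and c :: real shows "\<exists>P' Q'. (deriv ^^ n) (\<lambda>t. poly P t * exp (c*t) + poly Q t) = (\<lambda>t. poly P' t * exp (c*t) + poly Q' t)"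
proof (induction n arbitrary: P Q)
  case 0 thus ?case by auto
next
  case (Suc n)
  show ?case unfolding funpow_Suc_right comp_def pe_deriv_step by (rule Suc.IH)
qed

lemma pe_diff: fixes P Q :: "real poly" and c :: real shows "(\<lambda>t. poly P t * exp (c*t) + poly Q t) differentiable (at (x::real))"
  unfolding real_differentiable_def
  by (rule exI) (auto intro!: derivative_eq_intros poly_DERIV)

locale mt8 =
  fixes m1 m2 d :: nat and r :: real
  assumes m1: "m1 > 0" and m2: "m2 > 0" and r1: "\<bar>r\<bar> < 1"
begin

abbreviation "A \<equiv> 1 / real m1"
abbreviation "B \<equiv> 1 / real m2"

lemma AB_pos: "A > 0" "B > 0" using m1 m2 by auto

lemma pp_pos: assumes "-1 \<le> t" "t \<le> 1" shows "pp r d t > 0"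
proof -
  have "\<bar>r*t\<bar> \<le> \<bar>r\<bar>" using assms by (simp add: abs_mult mult_left_le)
  hence "1 + r*t > 0" using r1 by linarith
  thus ?thesis by (simp add: pp_def)
qed

lemma pp_cont: "continuous_on S (pp r d)"
  unfolding pp_def by (intro continuous_intros)

lemma pp_deriv: "\<exists>E. (pp r d has_real_derivative E) (at t)"
  unfolding pp_def by (auto intro!: derivative_eq_intros)

lemma gg_deriv_t: "((\<lambda>t. gg m1 m2 t k) has_real_derivative 2*(A+B)*Ud k t) (at t)"
  unfolding gg_U by (auto intro!: derivative_eq_intros U_deriv_t)

lemma gg_cont: "continuous_on S (\<lambda>t. gg m1 m2 t k)"
  using gg_deriv_t DERIV_isCont by (intro continuous_at_imp_continuous_on) blast

lemma f_cont: "continuous_on S (\<lambda>t. gg m1 m2 t k * pp r d t)"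
  using gg_cont pp_cont by (intro continuous_intros) auto

lemma f_int: "(\<lambda>t. gg m1 m2 t k * pp r d t) integrable_on {a..b}"
  using f_cont by (rule integrable_continuous_interval)

lemma gg_bound: assumes "-1 \<le> t" "t \<le> 1" shows "\<bar>gg m1 m2 t k\<bar> \<le> 2*(A+B) + 2*A"
proof -
  have "0 \<le> U k t" "U k t \<le> 1" using U_bounds assms by auto
  hence h1: "0 \<le> 2*(A+B)*U k t" and h2: "2*(A+B)*U k t \<le> 2*(A+B)" using AB_pos
    by (auto intro!: mult_nonneg_nonneg mult_left_le)
  have h3: "gg m1 m2 t k = 2*(A+B)*U k t - 2*A" by (simp add: gg_U)
  show ?thesis unfolding h3 abs_le_iff using h1 h2 AB_pos by linarith
qed

lemma f_bound: assumes "-1 \<le> t" "t \<le> 1"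
  shows "norm (gg m1 m2 t k * pp r d t) \<le> (2*(A+B) + 2*A) * pp r d t"
  using gg_bound[OF assms, of k] pp_pos[OF assms]
  by (simp add: abs_mult mult_right_mono)

lemma Uc: "continuous_on S (U k)"
  using U_deriv_t DERIV_isCont by (intro continuous_at_imp_continuous_on) blast

definition I where "I k = integral {-1..1} (\<lambda>t. gg m1 m2 t k * pp r d t)"

lemma dom:
  assumes "\<And>t. t \<in> {-1..1} \<Longrightarrow> (\<lambda>n. gg m1 m2 t (u n) * pp r d t) \<longlonglongrightarrow> g t"
  shows "(\<lambda>n. I (u n)) \<longlonglongrightarrow> integral {-1..1} g"
  unfolding I_def
proof (rule dominated_convergence(2)[where h="\<lambda>t. (2*(A+B) + 2*A) * pp r d t"])
  show "\<And>k. (\<lambda>t. gg m1 m2 t (u k) * pp r d t) integrable_on {- 1..1}" by (rule f_int)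
  show "(\<lambda>t. (2*(A+B) + 2*A) * pp r d t) integrable_on {- 1..1}"
    by (intro integrable_continuous_interval continuous_intros pp_cont)
  show "\<And>k x. x \<in> {- 1..1} \<Longrightarrow> norm (gg m1 m2 x (u k) * pp r d x) \<le> (2*(A+B) + 2*A) * pp r d x"
    using f_bound by auto
qed (use assms in auto)

lemma gg_tendsto: "u \<longlonglongrightarrow> k0 \<Longrightarrow> (\<lambda>n. gg m1 m2 t (u n)) \<longlonglongrightarrow> gg m1 m2 t k0"
  unfolding gg_U by (intro tendsto_intros isCont_tendsto_compose[OF U_cont_k])

lemma I_cont: "continuous_on S I"
proof (intro continuous_at_imp_continuous_on ballI continuous_at_sequentiallyI)
  fix k0 and u :: "nat \<Rightarrow> real" assume "u \<longlonglongrightarrow> k0"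
  thus "(\<lambda>n. I (u n)) \<longlonglongrightarrow> I k0"
    unfolding I_def[of k0]
    by (intro dom tendsto_intros gg_tendsto)
qed

lemma P_pos: "integral {-1..1} (pp r d) > 0"
  by (rule integral_pos_strict) (auto intro: pp_cont less_imp_le pp_pos)

lemma I_mono: assumes "k1 < k2" shows "I k2 < I k1"
proof -
  have "I k1 - I k2 = integral {-1..1} (\<lambda>t. gg m1 m2 t k1 * pp r d t - gg m1 m2 t k2 * pp r d t)"
    unfolding I_def by (rule integral_diff[symmetric]) (auto intro: f_int)
  also have "\<dots> = integral {-1..1} (\<lambda>t. 2*(A+B) * (U k1 t - U k2 t) * pp r d t)"
    unfolding gg_U by (simp add: algebra_simps)
  also have "\<dots> > 0"
  proof (rule integral_pos_strict)
    show "continuous_on {- 1..1::real} (\<lambda>t. 2 * (A + B) * (U k1 t - U k2 t) * pp r d t)"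
      using Uc pp_cont by (intro continuous_intros) auto
    fix x :: real
    show "x \<in> {- 1..1} \<Longrightarrow> 0 \<le> 2 * (A + B) * (U k1 x - U k2 x) * pp r d x"
    proof -
      assume x: "x \<in> {-1..1}"
      have "U k2 x \<le> U k1 x"
      proof (cases "x = -1 \<or> x = 1")
        case True thus ?thesis using U_end by auto
      next
        case False thus ?thesis using x U_mono_k[OF _ _ assms, of x] by auto
      qed
      thus ?thesis using AB_pos pp_pos[of x] x by (intro mult_nonneg_nonneg) auto
    qed
    show "x \<in> {- 1<..<1} \<Longrightarrow> 0 < 2 * (A + B) * (U k1 x - U k2 x) * pp r d x"
      using add_pos_pos[OF AB_pos] pp_pos[of x] U_mono_k[OF _ _ assms, of x]
      by (intro mult_pos_pos) auto
  qed simp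
  finally show ?thesis by simp
qed

lemma I_neg: "\<exists>k. I k < 0"
proof -
  define g where "g = (\<lambda>t. (2*(A+B)*(if t = -1 then 1 else 0) - 2*A) * pp r d t)"
  have "(\<lambda>n. I (real n)) \<longlonglongrightarrow> integral {-1..1} g"
  proof (rule dom)
    fix t :: real assume t: "t \<in> {-1..1}"
    show "(\<lambda>n. gg m1 m2 t (real n) * pp r d t) \<longlonglongrightarrow> g t"
    proof (cases "t = -1")
      case True thus ?thesis by (simp add: g_def gg_U U_end)
    next
      case False
      hence "-1 < t" using t by auto
      hence "(\<lambda>n. (2*(A+B)*U (real n) t - 2*A) * pp r d t) \<longlonglongrightarrow> (2*(A+B)*0 - 2*A) * pp r d t"
        by (intro tendsto_intros U_lim_top)
      thus ?thesis unfolding g_def gg_U using False by simp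
    qed
  qed
  moreover have "integral {-1..1} g = integral {-1..1} (\<lambda>t. (-2*A) * pp r d t)"
    by (rule integral_spike[of "{-1}"]) (auto simp: g_def)
  moreover have "\<dots> = -2*A * integral {-1..1} (pp r d)" by simp
  moreover have "\<dots> < 0" using P_pos AB_pos by (simp add: mult_pos_pos)
  ultimately have "(\<lambda>n. I (real n)) \<longlonglongrightarrow> -2*A * integral {-1..1} (pp r d)"
    "-2*A * integral {-1..1} (pp r d) < 0" by auto
  hence "eventually (\<lambda>n. I (real n) < 0) sequentially" by (rule order_tendstoD(2))
  thus ?thesis by (metis eventually_sequentially order_refl)
qed

lemma I_pos: "\<exists>k. I k > 0"
proof -
  define g where "g = (\<lambda>t. (2*(A+B)*(if t = 1 then 0 else 1) - 2*A) * pp r d t)"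
  have "(\<lambda>n. I (- real n)) \<longlonglongrightarrow> integral {-1..1} g"
  proof (rule dom)
    fix t :: real assume t: "t \<in> {-1..1}"
    show "(\<lambda>n. gg m1 m2 t (- real n) * pp r d t) \<longlonglongrightarrow> g t"
    proof (cases "t = 1")
      case True thus ?thesis by (simp add: g_def gg_U U_end)
    next
      case False
      hence "t < 1" using t by auto
      hence "(\<lambda>n. (2*(A+B)*U (- real n) t - 2*A) * pp r d t) \<longlonglongrightarrow> (2*(A+B)*1 - 2*A) * pp r d t"
        by (intro tendsto_intros U_lim_bot)
      thus ?thesis unfolding g_def gg_U using False by simp
    qed
  qed
  moreover have "integral {-1..1} g = integral {-1..1} (\<lambda>t. (2*B) * pp r d t)"
    by (rule integral_spike[of "{1}"]) (auto simp: g_def)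
  moreover have "\<dots> = 2*B * integral {-1..1} (pp r d)" by simp
  moreover have "\<dots> > 0" using P_pos AB_pos by (simp add: mult_pos_pos)
  ultimately have "(\<lambda>n. I (- real n)) \<longlonglongrightarrow> 2*B * integral {-1..1} (pp r d)"
    "2*B * integral {-1..1} (pp r d) > 0" by auto
  hence "eventually (\<lambda>n. I (- real n) > 0) sequentially" by (rule order_tendstoD(1))
  thus ?thesis by (metis eventually_sequentially order_refl)
qed

lemma I_unique: "\<exists>!k. I k = 0"
proof -
  obtain k1 k2 where k1: "I k1 > 0" and k2: "I k2 < 0" using I_pos I_neg by blast
  have "k1 < k2"
  proof (rule ccontr)
    assume "\<not> k1 < k2"
    hence "k2 = k1 \<or> k2 < k1" by auto
    thus False using I_mono[of k2 k1] k1 k2 by auto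
  qed
  then obtain k where "I k = 0"
    using IVT2'[of I k2 0 k1] I_cont k1 k2 by force
  moreover have "I k' = 0 \<Longrightarrow> k' = k" for k'
    using I_mono[of k k'] I_mono[of k' k] \<open>I k = 0\<close> by (cases k k' rule: linorder_cases) auto
  ultimately show ?thesis by blast
qed

lemma kk_root: "I (kk m1 m2 r d) = 0"
  unfolding kk_def using theI'[OF I_unique] by (simp add: I_def)


lemma gg_dec: assumes "x < y" shows "gg m1 m2 y k < gg m1 m2 x k"
proof (rule DERIV_neg_imp_decreasing_open[OF assms])
  fix z assume "x < z" "z < y"
  have "2*(A+B)*Ud k z < 0" using add_pos_pos[OF AB_pos] Ud_neg[of k z] by (simp add: mult_pos_neg)
  thus "\<exists>w. ((\<lambda>t. gg m1 m2 t k) has_real_derivative w) (at z) \<and> w < 0"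
    using gg_deriv_t by blast
qed (rule gg_cont)

lemma gg_le: "x \<le> y \<Longrightarrow> gg m1 m2 y k \<le> gg m1 m2 x k"
  using gg_dec[of x y k] by (cases "x = y") auto

lemma aux2: fixes a e y D :: real shows "2*(a*e - y)/D = (2*a/D)*e + (-2*y/D)"
  by (cases "D = 0") (simp_all add: field_simps)

abbreviation "K \<equiv> kk m1 m2 r d"
definition h where "h t = gg m1 m2 t K * pp r d t"

lemma h_cont: "continuous_on S h" unfolding h_def by (rule f_cont)
lemma h_int: "h integrable_on {a..b}" unfolding h_def by (rule f_int)

lemma int0a: fixes f :: "real \<Rightarrow> real" shows "-1 \<le> y \<Longrightarrow> integral {y..-1} f = (0::real)"
proof (cases "y = -1")
  case True thus ?thesis using integral_refl[of "-1::real" f] by (simp add: cbox_interval)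
next
  case False
  assume "-1 \<le> y" hence "{y..-1::real} = {}" using False by auto
  thus ?thesis by simp
qed
lemma int0b: fixes f :: "real \<Rightarrow> real" shows "y \<le> -1 \<Longrightarrow> integral {-1..y} f = (0::real)"
proof (cases "y = -1")
  case True thus ?thesis using integral_refl[of "-1::real" f] by (simp add: cbox_interval)
next
  case False
  assume "y \<le> -1" hence "{-1::real..y} = {}" using False by auto
  thus ?thesis by simp
qed
lemma h_eq: "h = (\<lambda>t. gg m1 m2 t K * pp r d t)" by (rule ext) (simp add: h_def)

definition G where "G x = integral {-1..x} h - integral {x..-1} h"

lemma G_eq: assumes "a \<le> -1" "a \<le> y" shows "G y = integral {a..y} h - integral {a..-1} h"
proof (cases "-1 \<le> y")
  case True
  have "integral {a..-1} h + integral {-1..y} h = integral {a..y} h"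
    by (rule Henstock_Kurzweil_Integration.integral_combine) (use True assms h_int in auto)
  thus ?thesis using True by (simp add: G_def int0a)
next
  case False
  have "integral {a..y} h + integral {y..-1} h = integral {a..-1} h"
    by (rule Henstock_Kurzweil_Integration.integral_combine) (use False assms h_int in auto)
  thus ?thesis using False by (simp add: G_def int0b)
qed

lemma G_deriv: "(G has_real_derivative h x) (at x)"
proof -
  define a where "a = min x (-1) - 1"
  define b where "b = x + 1"
  have "((\<lambda>y. integral {a..y} h) has_real_derivative h x) (at x within {a..b})"
    using a_def b_def by (intro integral_has_real_derivative h_cont) auto
  moreover have "at x within {a..b} = at x"
    using a_def b_def by (intro at_within_interior) auto
  ultimately have "((\<lambda>y. integral {a..y} h) has_real_derivative h x) (at x)" by simp
  hence D: "((\<lambda>y. integral {a..y} h - integral {a..-1} h) has_real_derivative h x - 0) (at x)"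
    by (intro DERIV_diff DERIV_const)
  show ?thesis
  proof (rule has_field_derivative_transform_within_open[OF D[simplified]])
    show "open {a<..}" by simp
    show "x \<in> {a<..}" using a_def by auto
    fix y assume "y \<in> {a<..}"
    thus "integral {a..y} h - integral {a..-1} h = G y" using a_def by (intro G_eq[symmetric]) auto
  qed
qed

lemma deriv_G: "deriv G = h"
  using G_deriv DERIV_imp_deriv by (intro ext) blast

lemma h_form: "\<exists>P Q. h = (\<lambda>t. poly P t * exp ((-K)*t) + poly Q t)"
proof -
  define PP where "PP = [:1, r:] ^ d"
  have pp_poly: "pp r d t = poly PP t" for t by (simp add: PP_def pp_def mult.commute)
  show ?thesis
  proof (cases "K = 0")
    case True
    have "h t = poly 0 t * exp ((-K)*t) + poly ([:B - A, -(A+B):] * PP) t" for t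
      unfolding h_def pp_poly using True by (simp add: gg_def algebra_simps diff_divide_distrib add_divide_distrib)
    thus ?thesis by blast
  next
    case False
    have dn: "exp K - exp (-K) \<noteq> 0" using den_ne[OF False] .
    define al where "al = 2*(A+B)/(exp K - exp(-K))"
    define be where "be = -2*(exp K/real m1 + exp (-K)/real m2)/(exp K - exp(-K))"
    have "gg m1 m2 t K = al * exp ((-K)*t) + be" for t
    proof -
      have "gg m1 m2 t K = 2 * ((1/real m1+1/real m2)*exp(-K*t) - (exp K/real m1 + exp(-K)/real m2)) / (exp K - exp(-K))"
        using False by (simp add: gg_def)
      also have "\<dots> = al * exp ((-K)*t) + be" unfolding al_def be_def by (rule aux2)
      finally show ?thesis .
    qed
    hence "h t = poly (smult al PP) t * exp ((-K)*t) + poly (smult be PP) t" for t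
      unfolding h_def pp_poly by (simp add: algebra_simps)
    thus ?thesis by blast
  qed
qed

lemma G_smooth: "(deriv ^^ n) G differentiable (at x)"
proof (cases n)
  case 0
  thus ?thesis using G_deriv real_differentiable_def by auto
next
  case (Suc m)
  obtain P Q where hPQ: "h = (\<lambda>t. poly P t * exp ((-K)*t) + poly Q t)" using h_form by blast
  have e1: "(deriv ^^ n) G = (deriv ^^ m) h" using Suc deriv_G by (simp add: funpow_Suc_right del: funpow.simps)
  obtain P' Q' where e2: "(deriv ^^ m) h = (\<lambda>t. poly P' t * exp ((-K)*t) + poly Q' t)"
    using pe_deriv[of m P "-K" Q] unfolding hPQ by blast
  show ?thesis unfolding e1 e2 by (rule pe_diff)
qed

lemma FF_G: "z \<in> {-1..1} \<Longrightarrow> G z = FF m1 m2 r d z"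
  by (simp add: G_def FF_def h_eq int0a)

lemma FF_1: "FF m1 m2 r d 1 = 0"
  using kk_root by (simp add: FF_def I_def)

lemma FF_m1: "FF m1 m2 r d (-1) = 0"
  by (simp add: FF_def)

lemma gg_end: "gg m1 m2 (-1) k = 2*B" "gg m1 m2 1 k = -2*A"
  by (simp_all add: gg_U U_end)

lemma FF_pos: assumes "-1 < z" "z < 1" shows "FF m1 m2 r d z > 0"
proof (cases "gg m1 m2 z K \<ge> 0")
  case True
  have "integral {-1..z} h > 0"
  proof (rule integral_pos_strict)
    show "-1 < z" by fact
    show "continuous_on {-1..z} h" by (rule h_cont)
    fix x assume x: "x \<in> {-1..z}"
    hence "gg m1 m2 x K \<ge> 0" using gg_le[of x z K] True by auto
    thus "0 \<le> h x" using x pp_pos[of x] assms unfolding h_def by auto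
  next
    fix x assume x: "x \<in> {-1<..<z}"
    hence "gg m1 m2 x K > 0" using gg_dec[of x z K] True by auto
    thus "0 < h x" using x pp_pos[of x] assms unfolding h_def by auto
  qed
  thus ?thesis by (simp add: FF_def h_eq)
next
  case False
  have pos: "integral {z..1} (\<lambda>t. - h t) > 0"
  proof (rule integral_pos_strict)
    show "z < 1" by fact
    show "continuous_on {z..1} (\<lambda>t. - h t)" by (intro continuous_intros h_cont)
    fix x assume x: "x \<in> {z..1}"
    hence "gg m1 m2 x K < 0" using gg_le[of z x K] False by auto
    thus "0 \<le> - h x" using x pp_pos[of x] assms unfolding h_def by (auto simp: mult_neg_pos less_imp_le)
  next
    fix x assume x: "x \<in> {z<..<1}"
    hence "gg m1 m2 x K < 0" using gg_le[of z x K] False by auto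
    thus "0 < - h x" using x pp_pos[of x] assms unfolding h_def by (auto simp: mult_neg_pos)
  qed
  have "integral {-1..z} h + integral {z..1} h = integral {-1..1} h"
    using assms by (intro Henstock_Kurzweil_Integration.integral_combine h_int) auto
  moreover have "integral {-1..1} h = 0" using kk_root by (simp add: I_def h_eq)
  moreover have "integral {z..1} (\<lambda>t. - h t) = - integral {z..1} h" by (rule integral_neg)
  ultimately have "integral {-1..z} h > 0" using pos by linarith
  thus ?thesis by (simp add: FF_def h_eq)
qed

lemma final_deriv: assumes "z \<in> {-1..1}" shows "deriv (\<lambda>x. deriv G x / pp r d x) z < 0"
proof -
  obtain E where E: "(pp r d has_real_derivative E) (at z)" using pp_deriv by blast
  have pz: "pp r d z > 0" using pp_pos assms by auto
  have D1: "((\<lambda>x. gg m1 m2 x K * pp r d x) has_real_derivative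
      (2*(A+B)*Ud K z * pp r d z + gg m1 m2 z K * E)) (at z)"
    using DERIV_mult[OF gg_deriv_t[of K] E] by (simp add: algebra_simps)
  have D2: "((\<lambda>x. gg m1 m2 x K * pp r d x / pp r d x) has_real_derivative
      ((2*(A+B)*Ud K z * pp r d z + gg m1 m2 z K * E) * pp r d z - E * (gg m1 m2 z K * pp r d z)) / (pp r d z)^Suc (Suc 0)) (at z)"
    by (rule DERIV_quotient[OF D1 E]) (use pz in auto)
  have eq: "((2*(A+B)*Ud K z * pp r d z + gg m1 m2 z K * E) * pp r d z - E * (gg m1 m2 z K * pp r d z)) / (pp r d z)^Suc (Suc 0)
     = 2*(A+B)*Ud K z" using pz by (simp add: field_simps power2_eq_square)
  have "(\<lambda>x. deriv G x / pp r d x) = (\<lambda>x. gg m1 m2 x K * pp r d x / pp r d x)"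
    by (simp add: deriv_G h_def)
  hence "deriv (\<lambda>x. deriv G x / pp r d x) z = 2*(A+B)*Ud K z"
    using DERIV_imp_deriv[OF D2] eq by simp
  also have "\<dots> < 0" using add_pos_pos[OF AB_pos] Ud_neg[of K z] by (simp add: mult_pos_neg)
  finally show ?thesis .
qed

end

theorem mainTheorem8:
  fixes m1 m2 d :: nat and r :: real
  assumes "m1 > 0" and "m2 > 0" and "d > 0" and "0 < \<bar>r\<bar>" and "\<bar>r\<bar> < 1"
  shows "\<exists>G :: real \<Rightarrow> real.
           (\<forall>n x. (deriv ^^ n) G differentiable (at x)) \<and>
           (\<forall>z\<in>{-1..1}. G z = FF m1 m2 r d z) \<and>
           (\<forall>z. -1 < z \<and> z < 1 \<longrightarrow> FF m1 m2 r d z > 0) \<and>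
           FF m1 m2 r d (-1) = 0 \<and> FF m1 m2 r d 1 = 0 \<and>
           deriv G (-1) = 2 * pp r d (-1) / real m2 \<and>
           deriv G 1 = - 2 * pp r d 1 / real m1 \<and>
           (\<forall>z\<in>{-1..1}. deriv (\<lambda>x. deriv G x / pp r d x) z < 0)"
proof -
  interpret mt8 m1 m2 d r using assms by unfold_locales auto
  show ?thesis
  proof (intro exI[of _ G] conjI allI ballI impI)
    show "\<And>n x. (deriv ^^ n) G differentiable (at x)" by (rule G_smooth)
    show "\<And>z. z \<in> {-1..1} \<Longrightarrow> G z = FF m1 m2 r d z" by (rule FF_G)
    show "\<And>z. -1 < z \<and> z < 1 \<Longrightarrow> FF m1 m2 r d z > 0" using FF_pos by auto
    show "FF m1 m2 r d (-1) = 0" by (rule FF_m1)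
    show "FF m1 m2 r d 1 = 0" by (rule FF_1)
    show "deriv G (-1) = 2 * pp r d (-1) / real m2" by (simp add: deriv_G h_def gg_end)
    show "deriv G 1 = - 2 * pp r d 1 / real m1" by (simp add: deriv_G h_def gg_end)
    show "\<And>z. z \<in> {-1..1} \<Longrightarrow> deriv (\<lambda>x. deriv G x / pp r d x) z < 0" by (rule final_deriv)
  qed
qed

end
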